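(* Let $p,\mu\in(1,\infty)$, let $\eta:[0,\infty)\to[0,1]$ be continuous, and set $$\omega(t):=\eta(t)(1+t)^{-\mu}+(1-\eta(t))(1+t)^{p-2},\quad t\ge0,\qquad G(\xi):=\int_0^{|\xi|}\int_0^s\omega(r)\,\mathrm{d}r\,\mathrm{d}s,\quad\xi\in\mathbb{R}^2.$$ Then there are constants $c_5,c_6>0$ such that $$c_5(1+|\xi|)^{-\mu}|\zeta|^2\le D^2G(\xi)(\zeta,\zeta)\le c_6(1+|\xi|)^{p-2}|\zeta|^2\quad\text{for all }\xi,\zeta\in\mathbb{R}^2.$$ *)

theory Defs
  imports "HOL-Analysis.Analysis"
begin

definition omega :: "real \<Rightarrow> real \<Rightarrow> (real \<Rightarrow> real) \<Rightarrow> real \<Rightarrow> real" where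
  "omega p mu eta t = eta t * (1 + t) powr (- mu) + (1 - eta t) * (1 + t) powr (p - 2)"

definition Gfun :: "real \<Rightarrow> real \<Rightarrow> (real \<Rightarrow> real) \<Rightarrow> real ^ 2 \<Rightarrow> real" where
  "Gfun p mu eta xi =
     integral {0..norm xi} (\<lambda>s. integral {0..s} (\<lambda>r. omega p mu eta r))"

end

theory Submission
  imports Defs
begin


lemma norm_lim:
  fixes phi :: "real \<Rightarrow> real"
  assumes "(phi has_real_derivative d) (at 0 within {0..b})" "b > 0" "phi 0 = 0"
  shows "((\<lambda>y::real^2. phi (norm y) / norm y) \<longlongrightarrow> d) (at 0)"
proof -
  have 1: "((\<lambda>t. phi t / t) \<longlongrightarrow> d) (at 0 within {0..b})"
    using assms(1) unfolding has_field_derivative_iff using assms(3) by simp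
  have 2: "filterlim (\<lambda>y::real^2. norm y) (at 0 within {0..b}) (at 0)"
    unfolding filterlim_at
  proof
    show "eventually (\<lambda>y::real^2. norm y \<in> {0..b} \<and> norm y \<noteq> 0) (at 0)"
      using assms(2) by (auto simp: eventually_at intro!: exI[of _ b])
    show "((\<lambda>y::real^2. norm y) \<longlongrightarrow> 0) (at 0)"
      using tendsto_norm[OF tendsto_ident_at, of "0::real^2" UNIV] by simp
  qed
  show ?thesis using filterlim_compose[OF 1 2] by simp
qed

lemma deriv_at0:
  fixes f :: "'a::real_normed_vector \<Rightarrow> real" and L :: "'a \<Rightarrow> 'b::real_normed_vector"
  assumes f: "(f \<longlongrightarrow> f 0) (at 0)" and L: "bounded_linear L"
  shows "((\<lambda>y. f y *\<^sub>R L y) has_derivative (\<lambda>v. f 0 *\<^sub>R L v)) (at 0)"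
proof -
  obtain K where K: "\<And>x. norm (L x) \<le> norm x * K" using bounded_linear.bounded[OF L] by blast
  have L0: "L 0 = 0" using L by (simp add: linear_simps)
  have t: "((\<lambda>y. f y - f 0) \<longlongrightarrow> 0) (at 0)" using f by (simp add: LIM_zero)
  show ?thesis
    unfolding has_derivative_at_within
  proof
    show "bounded_linear (\<lambda>v. f 0 *\<^sub>R L v)" by (rule bounded_linear_compose[OF bounded_linear_scaleR_right L])
    have "norm ((f y *\<^sub>R L y - f 0 *\<^sub>R L 0 - f 0 *\<^sub>R L (y - 0)) /\<^sub>R norm (y - 0))
           \<le> norm (f y - f 0) * K" for y
    proof (cases "y = 0")
      case True then show ?thesis using L0 K[of 0] by simp
    next
      case False
      have "norm ((f y *\<^sub>R L y - f 0 *\<^sub>R L 0 - f 0 *\<^sub>R L (y - 0)) /\<^sub>R norm (y - 0))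
          = \<bar>f y - f 0\<bar> * (norm (L y) / norm y)"
        using L0 by (simp add: scaleR_diff_left[symmetric] divide_simps)
      also have "\<dots> \<le> \<bar>f y - f 0\<bar> * K"
        using K[of y] False by (intro mult_left_mono) (auto simp: divide_simps mult.commute)
      finally show ?thesis by simp
    qed
    then show "((\<lambda>y. (f y *\<^sub>R L y - f 0 *\<^sub>R L 0 - f 0 *\<^sub>R L (y - 0)) /\<^sub>R norm (y - 0)) \<longlongrightarrow> 0) (at 0)"
      by (intro tendsto_0_le[OF t, where K = K] always_eventually) auto
  qed
qed



locale P54 =
  fixes p mu :: real and eta :: "real \<Rightarrow> real"
  assumes p: "p > 1" and mu: "mu > 1" and ceta: "continuous_on {0..} eta"
    and eb: "\<And>t. t \<ge> 0 \<Longrightarrow> 0 \<le> eta t \<and> eta t \<le> 1"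
begin

definition w where "w = omega p mu eta"
definition h where "h s = integral {0..s} w"
definition g where "g t = integral {0..t} h"
definition k where "k t = (if t = 0 then w 0 else h t / t)"
definition m where "m t = (if t = 0 then 0 else (w t - k t) / t^2)"
definition c6 where "c6 = 2 + 2 / (p - 1)"

lemma w_cont: "continuous_on {0..} w"
  unfolding w_def omega_def
  by (intro continuous_intros ceta) auto

lemma w_cont_b: "continuous_on {0..b} w"
  using w_cont by (rule continuous_on_subset) auto

lemma w_bounds:
  assumes "t \<ge> 0"
  shows "(1+t) powr (-mu) \<le> w t \<and> w t \<le> (1+t) powr (p-2)"
proof -
  let ?a = "(1+t) powr (-mu)" let ?b = "(1+t) powr (p-2)"
  have le: "?a \<le> ?b" by (rule powr_mono) (use assms p mu in auto)
  obtain e where e: "e = eta t" "0 \<le> e" "e \<le> 1" using eb assms by auto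
  have eq: "w t = e * ?a + (1-e) * ?b" using e by (simp add: w_def omega_def)
  have 1: "(1-e)*?a \<le> (1-e)*?b" using le e by (intro mult_left_mono) auto
  have 2: "e*?a \<le> e*?b" using le e by (intro mult_left_mono) auto
  show ?thesis unfolding eq using 1 2 by (auto simp: algebra_simps)
qed

lemma c6_ge: "c6 \<ge> 2" "c6 \<ge> 2 / (p-1)"
  using p by (auto simp: c6_def)

lemma h_vd:
  assumes "0 \<le> t" "t \<le> b"
  shows "(h has_real_derivative w t) (at t within {0..b})"
  using integral_has_vector_derivative[of 0 b w t] w_cont_b assms
  by (auto simp: h_def[abs_def] has_real_derivative_iff_has_vector_derivative)

lemma h_rd:
  assumes "0 < t"
  shows "(h has_real_derivative w t) (at t)"
proof -
  have "(h has_real_derivative w t) (at t within {0..t+1})" by (rule h_vd) (use assms in auto)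
  then show ?thesis using assms by (simp add: at_within_Icc_at)
qed

lemma h_cont_b: "continuous_on {0..b} h"
  unfolding h_def[abs_def]
  by (rule indefinite_integral_continuous_1) (rule integrable_continuous_interval[OF w_cont_b])

lemma g_vd:
  assumes "0 \<le> t" "t \<le> b"
  shows "(g has_real_derivative h t) (at t within {0..b})"
  using integral_has_vector_derivative[of 0 b h t] h_cont_b assms
  by (auto simp: g_def[abs_def] has_real_derivative_iff_has_vector_derivative)

lemma g_rd:
  assumes "0 < t"
  shows "(g has_real_derivative h t) (at t)"
proof -
  have "(g has_real_derivative h t) (at t within {0..t+1})" by (rule g_vd) (use assms in auto)
  then show ?thesis using assms by (simp add: at_within_Icc_at)
qed

lemma h0: "h 0 = 0" and g0: "g 0 = 0" by (auto simp: h_def g_def)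

lemma k_lim: "((\<lambda>y::real^2. k (norm y)) \<longlongrightarrow> k 0) (at 0)"
proof -
  have "((\<lambda>y::real^2. h (norm y) / norm y) \<longlongrightarrow> w 0) (at 0)"
    by (rule norm_lim[OF h_vd[of 0 1]]) (auto simp: h0)
  moreover have "eventually (\<lambda>y::real^2. h (norm y) / norm y = k (norm y)) (at 0)"
    by (auto simp: eventually_at k_def intro!: exI[of _ 1])
  ultimately show ?thesis by (simp add: tendsto_cong k_def)
qed

lemma g_lim: "((\<lambda>y::real^2. g (norm y) / norm y) \<longlongrightarrow> 0) (at 0)"
  using norm_lim[OF g_vd[of 0 1]] by (auto simp: g0 h0)

lemma k_deriv:
  assumes "0 < t"
  shows "(k has_real_derivative (w t - k t) / t) (at t)"
proof -
  have "((\<lambda>s. h s / s) has_real_derivative (w t * t - h t * 1) / (t * t)) (at t)"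
    using assms by (intro DERIV_divide h_rd DERIV_ident) auto
  then have "((\<lambda>s. h s / s) has_real_derivative (w t - k t) / t) (at t)"
    using assms by (simp add: k_def field_simps)
  then show ?thesis
    by (rule has_field_derivative_transform_within_open[where S = "{0<..}"]) (use assms in \<open>auto simp: k_def\<close>)
qed

end

context P54 begin

lemma w_int: "w integrable_on {0..t}"
  by (rule integrable_continuous_interval[OF w_cont_b])

lemma h_lower:
  assumes "t \<ge> 0"
  shows "t * (1+t) powr (-mu) \<le> h t"
proof -
  have "integral {0..t} (\<lambda>r. (1+t) powr (-mu)) \<le> integral {0..t} w"
  proof (rule integral_le[OF _ w_int])
    show "(\<lambda>r. (1+t) powr (-mu)) integrable_on {0..t}" by (intro integrable_continuous_interval continuous_intros)
    fix r assume r: "r \<in> {0..t}"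
    have "(1+t) powr (-mu) \<le> (1+r) powr (-mu)" using r mu by (intro powr_mono2') auto
    also have "\<dots> \<le> w r" using w_bounds[of r] r by auto
    finally show "(1+t) powr (-mu) \<le> w r" .
  qed
  then show ?thesis using assms by (simp add: h_def)
qed

lemma pow_int:
  assumes "t \<ge> 0"
  shows "((\<lambda>r. (1+r) powr (p-2)) has_integral (((1+t) powr (p-1) - 1) / (p-1))) {0..t}"
proof -
  have "((\<lambda>r. (1+r) powr (p-2)) has_integral ((1+t) powr (p-1) / (p-1) - (1+0) powr (p-1) / (p-1))) {0..t}"
  proof (rule fundamental_theorem_of_calculus[OF assms, where f = "\<lambda>r. (1+r) powr (p-1) / (p-1)" and f' = "\<lambda>r. (1+r) powr (p-2)"])
    fix x :: real assume x: "x \<in> {0..t}"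
    have "((\<lambda>r. (1+r) powr (p-1) / (p-1)) has_real_derivative ((p-1) * (1+x) powr (p-1-1) * (0+1)) / (p-1)) (at x)"
      using x by (intro DERIV_cdivide DERIV_chain2[OF has_real_derivative_powr] derivative_intros) auto
    moreover have "((p-1) * (1+x) powr (p-1-1) * (0+1)) / (p-1) = (1+x) powr (p-2)"
      using p by simp
    ultimately show "((\<lambda>r. (1+r) powr (p-1) / (p-1)) has_vector_derivative (1+x) powr (p-2)) (at x within {0..t})"
      by (simp add: has_real_derivative_iff_has_vector_derivative[symmetric] has_field_derivative_at_within)
  qed
  then show ?thesis by (simp add: diff_divide_distrib)
qed

lemma h_upper:
  assumes "t > 0"
  shows "h t \<le> c6 * t * (1+t) powr (p-2)"
proof (cases "p \<ge> 2")
  case True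
  have "integral {0..t} w \<le> integral {0..t} (\<lambda>r. (1+t) powr (p-2))"
  proof (rule integral_le[OF w_int])
    show "(\<lambda>r. (1+t) powr (p-2)) integrable_on {0..t}" by (intro integrable_continuous_interval continuous_intros)
    fix r assume r: "r \<in> {0..t}"
    have "w r \<le> (1+r) powr (p-2)" using w_bounds[of r] r by auto
    also have "\<dots> \<le> (1+t) powr (p-2)" using r True by (intro powr_mono2) auto
    finally show "w r \<le> (1+t) powr (p-2)" .
  qed
  then have "h t \<le> t * (1+t) powr (p-2)" using assms by (simp add: h_def)
  also have "\<dots> \<le> c6 * t * (1+t) powr (p-2)"
    using c6_ge assms by (simp add: mult_right_mono)
  finally show ?thesis .
next
  case False
  have h1: "h t \<le> t"
  proof -
    have "integral {0..t} w \<le> integral {0..t} (\<lambda>r. 1::real)"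
    proof (rule integral_le[OF w_int])
      show "(\<lambda>r. 1::real) integrable_on {0..t}" by (intro integrable_continuous_interval continuous_intros)
      fix r assume r: "r \<in> {0..t}"
      have "w r \<le> (1+r) powr (p-2)" using w_bounds[of r] r by auto
      also have "\<dots> \<le> (1+r) powr 0" using r False by (intro powr_mono) auto
      finally show "w r \<le> 1" using r by simp
    qed
    then show ?thesis using assms by (simp add: h_def)
  qed
  have h2: "h t \<le> (1+t) powr (p-1) / (p-1)"
  proof -
    have "integral {0..t} w \<le> integral {0..t} (\<lambda>r. (1+r) powr (p-2))"
    proof (rule integral_le[OF w_int])
      show "(\<lambda>r. (1+r) powr (p-2)) integrable_on {0..t}" using has_integral_integrable[OF pow_int] assms by auto
      fix r assume r: "r \<in> {0..t}"
      show "w r \<le> (1+r) powr (p-2)" using w_bounds[of r] r by auto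
    qed
    also have "\<dots> = ((1+t) powr (p-1) - 1) / (p-1)" using pow_int assms by (simp add: integral_unique)
    also have "\<dots> \<le> (1+t) powr (p-1) / (p-1)" using p by (simp add: divide_right_mono)
    finally show ?thesis by (simp add: h_def)
  qed
  have split: "(1+t) powr (p-1) = (1+t) * (1+t) powr (p-2)"
    using assms by (simp add: powr_add[symmetric] powr_mult_base)
  show ?thesis
  proof (cases "t \<le> 1")
    case True
    have "(1+t) powr (-1) \<le> (1+t) powr (p-2)" using assms p by (intro powr_mono) auto
    moreover have "(1+t) powr (-1) = 1 / (1+t)" using assms by (simp add: powr_minus divide_inverse)
    moreover have "1 / (1+t) \<ge> 1/2" using True assms by (simp add: field_simps)
    ultimately have "(1+t) powr (p-2) \<ge> 1/2" by linarith
    then have "c6 * (1+t) powr (p-2) \<ge> 2 * (1/2)" using c6_ge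
      by (intro mult_mono) auto
    then have "t * 1 \<le> t * (c6 * (1+t) powr (p-2))" using assms by (intro mult_left_mono) auto
    then show ?thesis using h1 by (simp add: mult_ac)
  next
    case False
    have "(1+t) powr (p-1) / (p-1) = (1+t) * ((1+t) powr (p-2) / (p-1))" using split by simp
    also have "\<dots> \<le> (2*t) * ((1+t) powr (p-2) / (p-1))" using False p by (intro mult_right_mono) auto
    also have "\<dots> = t * (2/(p-1)) * (1+t) powr (p-2)" by simp
    also have "\<dots> \<le> t * c6 * (1+t) powr (p-2)" using c6_ge assms by (intro mult_right_mono mult_left_mono) auto
    finally show ?thesis using h2 by (simp add: mult_ac)
  qed
qed

lemma k_bounds:
  assumes "t \<ge> 0"
  shows "(1+t) powr (-mu) \<le> k t \<and> k t \<le> c6 * (1+t) powr (p-2)"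
proof (cases "t = 0")
  case True
  then show ?thesis using w_bounds[of 0] c6_ge by (simp add: k_def)
next
  case False
  then have t: "t > 0" using assms by simp
  show ?thesis using h_lower[of t] h_upper[OF t] t by (simp add: k_def field_simps)
qed

lemma w_bounds2:
  assumes "t \<ge> 0"
  shows "(1+t) powr (-mu) \<le> w t \<and> w t \<le> c6 * (1+t) powr (p-2)"
proof -
  have "(1+t) powr (p-2) \<le> c6 * (1+t) powr (p-2)"
    using mult_right_mono[of 1 c6 "(1+t) powr (p-2)"] c6_ge by auto
  then show ?thesis using w_bounds[OF assms] by linarith
qed

end

context P54 begin

definition DG :: "(real^2) \<Rightarrow> ((real^2) \<Rightarrow>\<^sub>L real)" where
  "DG x = k (norm x) *\<^sub>R blinfun_inner_left x"

definition D2G :: "(real^2) \<Rightarrow> ((real^2) \<Rightarrow>\<^sub>L ((real^2) \<Rightarrow>\<^sub>L real))" where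
  "D2G x = Blinfun (\<lambda>z. k (norm x) *\<^sub>R blinfun_inner_left z + (m (norm x) * (x \<bullet> z)) *\<^sub>R blinfun_inner_left x)"

lemma D2G_apply:
  "blinfun_apply (D2G x) = (\<lambda>z. k (norm x) *\<^sub>R blinfun_inner_left z + (m (norm x) * (x \<bullet> z)) *\<^sub>R blinfun_inner_left x)"
  unfolding D2G_def
proof (rule bounded_linear_Blinfun_apply)
  show "bounded_linear (\<lambda>z. k (norm x) *\<^sub>R blinfun_inner_left z + (m (norm x) * (x \<bullet> z)) *\<^sub>R blinfun_inner_left x)"
    by (intro bounded_linear_add bounded_linear_compose[OF bounded_linear_scaleR_right bounded_linear_blinfun_inner_left]
        bounded_linear_compose[OF bounded_linear_scaleR_left bounded_linear_compose[OF bounded_linear_mult_right bounded_linear_inner_right]])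
qed

lemma Gfun_eq: "Gfun p mu eta = (\<lambda>x. g (norm x))"
  by (simp add: fun_eq_iff Gfun_def g_def h_def[abs_def] w_def)

lemma DG_eq: "DG = (\<lambda>y. k (norm y) *\<^sub>R blinfun_inner_left y)"
  by (simp add: fun_eq_iff DG_def)

lemma G_deriv: "(Gfun p mu eta has_derivative blinfun_apply (DG x)) (at x)"
proof (cases "x = 0")
  case False
  then have nx: "norm x > 0" by simp
  have "((\<lambda>y. g (norm y)) has_derivative (\<lambda>v. h (norm x) * (v \<bullet> sgn x))) (at x)"
    using has_derivative_compose[OF has_derivative_norm[OF False] has_field_derivative_imp_has_derivative[OF g_rd[OF nx]]]
    by simp
  then show ?thesis unfolding Gfun_eq
    by (rule has_derivative_eq_rhs) (use False in \<open>auto simp: fun_eq_iff DG_def k_def sgn_div_norm scaleR_blinfun.rep_eq field_simps\<close>)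
next
  case True
  show ?thesis unfolding Gfun_eq True has_derivative_at_within
  proof
    show "bounded_linear (blinfun_apply (DG 0))" by (rule blinfun.bounded_linear_right)
    show "((\<lambda>y. (g (norm y) - g (norm (0::real^2)) - blinfun_apply (DG 0) (y - 0)) /\<^sub>R norm (y - 0)) \<longlongrightarrow> 0) (at 0)"
      using g_lim by (simp add: g0 DG_def divide_inverse mult.commute scaleR_blinfun.rep_eq)
  qed
qed

lemma DG_deriv: "(DG has_derivative blinfun_apply (D2G x)) (at x)"
proof (cases "x = 0")
  case False
  then have nx: "norm x > 0" by simp
  have kn: "((\<lambda>y. k (norm y)) has_derivative (\<lambda>v. (w (norm x) - k (norm x)) / norm x * (v \<bullet> sgn x))) (at x)"
    using has_derivative_compose[OF has_derivative_norm[OF False] has_field_derivative_imp_has_derivative[OF k_deriv[OF nx]]]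
    by simp
  have Ld: "(blinfun_inner_left has_derivative blinfun_inner_left) (at x)"
    by (rule bounded_linear_imp_has_derivative[OF bounded_linear_blinfun_inner_left])
  show ?thesis unfolding DG_eq
    by (rule has_derivative_eq_rhs[OF has_derivative_scaleR[OF kn Ld]])
       (use False in \<open>auto simp: fun_eq_iff D2G_apply m_def sgn_div_norm power2_eq_square inner_commute field_simps\<close>)
next
  case True
  have "((\<lambda>y::real^2. k (norm y) *\<^sub>R blinfun_inner_left y) has_derivative (\<lambda>v::real^2. k (norm (0::real^2)) *\<^sub>R blinfun_inner_left v)) (at 0)"
    using deriv_at0[of "\<lambda>y::real^2. k (norm y)" blinfun_inner_left] k_lim bounded_linear_blinfun_inner_left by (simp add: bounded_linear_blinfun_inner_left)
  then show ?thesis unfolding DG_eq True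
    by (rule has_derivative_eq_rhs) (auto simp: fun_eq_iff D2G_apply)
qed

lemma quad_bounds:
  fixes x z :: "real^2"
  shows "(1 + norm x) powr (- mu) * (norm z)\<^sup>2 \<le> blinfun_apply (blinfun_apply (D2G x) z) z \<and>
         blinfun_apply (blinfun_apply (D2G x) z) z \<le> c6 * (1 + norm x) powr (p - 2) * (norm z)\<^sup>2"
proof -
  define t where "t = norm x"
  define lo where "lo = (1 + t) powr (- mu)"
  define hi where "hi = c6 * (1 + t) powr (p - 2)"
  have Q: "blinfun_apply (blinfun_apply (D2G x) z) z = k t * (norm z)\<^sup>2 + m t * (x \<bullet> z)\<^sup>2"
    by (simp add: D2G_apply t_def dot_square_norm power2_eq_square inner_commute plus_blinfun.rep_eq scaleR_blinfun.rep_eq)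
  have kb: "lo \<le> k t" "k t \<le> hi" using k_bounds[of t] by (auto simp: t_def lo_def hi_def)
  have wb: "lo \<le> w t" "w t \<le> hi" using w_bounds2[of t] by (auto simp: t_def lo_def hi_def)
  show ?thesis
  proof (cases "x = 0")
    case True
    then have "t = 0" by (simp add: t_def)
    then have "blinfun_apply (blinfun_apply (D2G x) z) z = k t * (norm z)\<^sup>2"
      unfolding Q by (simp add: m_def)
    then show ?thesis using kb unfolding lo_def hi_def t_def
      by (auto intro: mult_right_mono)
  next
    case False
    then have tp: "t > 0" by (simp add: t_def)
    define a where "a = (x \<bullet> z)\<^sup>2 / t^2"
    have a0: "0 \<le> a" by (simp add: a_def)
    have "(x \<bullet> z)\<^sup>2 \<le> (x \<bullet> x) * (z \<bullet> z)" by (rule Cauchy_Schwarz_ineq)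
    then have "(x \<bullet> z)\<^sup>2 \<le> t^2 * (norm z)\<^sup>2" by (simp add: t_def power2_norm_eq_inner)
    then have a1: "a \<le> (norm z)\<^sup>2" using tp by (simp add: a_def divide_simps mult.commute)
    have Q2: "blinfun_apply (blinfun_apply (D2G x) z) z = k t * ((norm z)\<^sup>2 - a) + w t * a"
      unfolding Q using tp by (simp add: m_def a_def field_simps)
    have 1: "lo * ((norm z)\<^sup>2 - a) \<le> k t * ((norm z)\<^sup>2 - a)" using kb a1 by (intro mult_right_mono) auto
    have 2: "lo * a \<le> w t * a" using wb a0 by (intro mult_right_mono) auto
    have 3: "k t * ((norm z)\<^sup>2 - a) \<le> hi * ((norm z)\<^sup>2 - a)" using kb a1 by (intro mult_right_mono) auto
    have 4: "w t * a \<le> hi * a" using wb a0 by (intro mult_right_mono) auto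
    have "lo * (norm z)\<^sup>2 \<le> blinfun_apply (blinfun_apply (D2G x) z) z"
      unfolding Q2 using 1 2 by (simp add: algebra_simps)
    moreover have "blinfun_apply (blinfun_apply (D2G x) z) z \<le> hi * (norm z)\<^sup>2"
      unfolding Q2 using 3 4 by (simp add: algebra_simps)
    ultimately show ?thesis by (simp add: lo_def hi_def t_def)
  qed
qed

end

theorem proposition5p4:
  fixes p mu :: real and eta :: "real \<Rightarrow> real"
  assumes "p > 1" and "mu > 1"
    and "continuous_on {0..} eta"
    and "\<And>t. t \<ge> 0 \<Longrightarrow> 0 \<le> eta t \<and> eta t \<le> 1"
  shows "\<exists>c5 c6 (DG :: (real^2) \<Rightarrow> ((real^2) \<Rightarrow>\<^sub>L real))
              (D2G :: (real^2) \<Rightarrow> ((real^2) \<Rightarrow>\<^sub>L ((real^2) \<Rightarrow>\<^sub>L real))).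
           c5 > 0 \<and> c6 > 0 \<and>
           (\<forall>x. (Gfun p mu eta has_derivative blinfun_apply (DG x)) (at x)) \<and>
           (\<forall>x. (DG has_derivative blinfun_apply (D2G x)) (at x)) \<and>
           (\<forall>xi zeta.
              c5 * (1 + norm xi) powr (- mu) * (norm zeta)\<^sup>2 \<le> blinfun_apply (blinfun_apply (D2G xi) zeta) zeta \<and>
              blinfun_apply (blinfun_apply (D2G xi) zeta) zeta \<le> c6 * (1 + norm xi) powr (p - 2) * (norm zeta)\<^sup>2)"
proof -
  interpret P: P54 p mu eta using assms by unfold_locales auto
  have "P.c6 > 0" using P.c6_ge by linarith
  then show ?thesis
    using P.G_deriv P.DG_deriv P.quad_bounds
    by (intro exI[of _ 1] exI[of _ P.c6] exI[of _ P.DG] exI[of _ P.D2G]) auto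
qed

end
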